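(* Let $M,M'\in\mathrm{Mat}(2,\mathbb{Z})$ be such that their reductions mod $n$ are $\mathrm{Mat}(2,\mathbb{Z}_n)^\times$-conjugate for some $n\ge2$. Then $\det(M)\equiv\det(M')$ and $\mathrm{trace}(M)\equiv\mathrm{trace}(M')$ mod $n$, and the matrix gcds $r=\mathrm{mgcd}(M)$, $r'=\mathrm{mgcd}(M')$ generate the same ideal in $\mathbb{Z}_n$, i.e. $r\,\mathbb{Z}_n=r'\,\mathbb{Z}_n$.
   Context: For $M=\begin{pmatrix}a&b\\c&d\end{pmatrix}$, $\mathrm{mgcd}(M)=\gcd(b,c,d-a)\ge0$. $\mathrm{Mat}(2,\mathbb{Z}_n)^\times$ is the group of invertible $2\times2$ matrices over $\mathbb{Z}_n=\mathbb{Z}/n\mathbb{Z}$. *)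

theory Defs
  imports "HOL-Analysis.Analysis" "HOL-Number_Theory.Cong"
begin

definition mat_cong :: "int \<Rightarrow> int^2^2 \<Rightarrow> int^2^2 \<Rightarrow> bool" where
  "mat_cong n A B \<longleftrightarrow> (\<forall>i j. [A $ i $ j = B $ i $ j] (mod n))"

text \<open>Reductions mod n are conjugate by an element of GL(2,Z_n): there is an integer matrix P
  whose reduction is invertible mod n (equivalently det P is a unit mod n) with
  P^{-1} M P = M' mod n, i.e. M P = P M' mod n.\<close>
definition conj_mod :: "int \<Rightarrow> int^2^2 \<Rightarrow> int^2^2 \<Rightarrow> bool" where
  "conj_mod n M M' \<longleftrightarrow> (\<exists>P Q :: int^2^2. mat_cong n (P ** Q) (mat 1) \<and> mat_cong n (Q ** P) (mat 1)
      \<and> mat_cong n (Q ** M ** P) M')"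

definition mgcd :: "int^2^2 \<Rightarrow> int" where
  "mgcd M = gcd (M $ 1 $ 2) (gcd (M $ 2 $ 1) (M $ 2 $ 2 - M $ 1 $ 1))"

text \<open>The ideal r Z_n, as a subset of Z_n represented by {0..n-1}.\<close>
definition ideal_mod :: "int \<Rightarrow> int \<Rightarrow> int set" where
  "ideal_mod n r = {(r * x) mod n | x. True}"

end

theory Submission
  imports Defs
begin

lemma mm_entry: "((A::int^2^2) ** B) $ i $ j = A$i$1 * B$1$j + A$i$2 * B$2$j"
  by (simp add: matrix_matrix_mult_def sum_2)

lemma mat1_entry: "(mat 1 :: int^2^2) $ i $ j = (if i = j then 1 else 0)"
  by (simp add: mat_def)

lemma mat_cong_refl: "mat_cong n A A"
  by (simp add: mat_cong_def)

lemma mat_cong_sym: "mat_cong n A B \<Longrightarrow> mat_cong n B A"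
  by (simp add: mat_cong_def cong_sym)

lemma mat_cong_trans: "mat_cong n A B \<Longrightarrow> mat_cong n B C \<Longrightarrow> mat_cong n A C"
  unfolding mat_cong_def by (meson cong_trans)

lemma mat_cong_mult: "mat_cong n A A' \<Longrightarrow> mat_cong n B B' \<Longrightarrow> mat_cong n ((A::int^2^2) ** B) (A' ** B')"
  unfolding mat_cong_def mm_entry
  by (intro allI cong_add cong_mult) auto

lemma mat_cong_det: "mat_cong n (A::int^2^2) B \<Longrightarrow> [det A = det B] (mod n)"
  unfolding mat_cong_def det_2
  by (intro cong_diff cong_mult) auto

lemma mat_cong_trace: "mat_cong n (A::int^2^2) B \<Longrightarrow> [trace A = trace B] (mod n)"
  unfolding mat_cong_def trace_def sum_2
  by (intro cong_add) auto

definition inS :: "int \<Rightarrow> int \<Rightarrow> int \<Rightarrow> bool" where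
  "inS r n x \<longleftrightarrow> (\<exists>u w. x = r*u + n*w)"

lemma inS_diff: "inS r n x \<Longrightarrow> inS r n y \<Longrightarrow> inS r n (x - y)"
  unfolding inS_def
proof (elim exE)
  fix u w u' w' assume "x = r*u + n*w" "y = r*u' + n*w'"
  then show "\<exists>u w. x - y = r*u + n*w"
    by (rule_tac x="u-u'" in exI, rule_tac x="w-w'" in exI) (simp add: algebra_simps)
qed

lemma inS_gcd: "inS r n x \<Longrightarrow> inS r n y \<Longrightarrow> inS r n (gcd x y)"
proof -
  assume a: "inS r n x" "inS r n y"
  obtain s t where st: "s * x + t * y = gcd x y" using bezout_int by blast
  from a obtain u w u' w' where "x = r*u + n*w" "y = r*u' + n*w'" unfolding inS_def by blast
  then have "gcd x y = r*(s*u + t*u') + n*(s*w+t*w')" using st[symmetric]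
    by (simp add: algebra_simps)
  then show ?thesis unfolding inS_def by blast
qed

lemma inS_cong: "[x = y] (mod n) \<Longrightarrow> r dvd y \<Longrightarrow> inS r n x"
proof -
  assume c: "[x = y] (mod n)" and d: "r dvd y"
  from c obtain k where "x = y + n*k" by (metis cong_iff_lin cong_sym)
  moreover from d obtain u where "y = r*u" by blast
  ultimately show ?thesis unfolding inS_def by blast
qed

lemma ideal_sub: "inS r n r' \<Longrightarrow> ideal_mod n r' \<subseteq> ideal_mod n r"
proof
  fix z assume "inS r n r'" "z \<in> ideal_mod n r'"
  then obtain u w x where e: "r' = r*u + n*w" "z = (r'*x) mod n"
    unfolding inS_def ideal_mod_def by blast
  have "(r'*x) mod n = (r*(u*x) + n*(w*x)) mod n" using e by (simp add: algebra_simps)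
  also have "\<dots> = (r*(u*x)) mod n" by simp
  finally show "z \<in> ideal_mod n r" using e unfolding ideal_mod_def by blast
qed

lemma one_dir:
  fixes M M' P Q :: "int^2^2"
  assumes qp: "mat_cong n (Q ** P) (mat 1)" and c: "mat_cong n (Q ** M ** P) M'"
  shows "inS (mgcd M) n (mgcd M')"
proof -
  define r where "r = mgcd M"
  define a where "a = M$1$1"
  have r1: "r dvd M$1$2" and r2: "r dvd M$2$1" and r3: "r dvd M$2$2 - a"
    unfolding r_def mgcd_def a_def by (auto intro: dvd_trans[OF gcd_dvd2])
  obtain z2 where z2: "M$1$2 = r*z2" using r1 by blast
  obtain z3 where z3: "M$2$1 = r*z3" using r2 by blast
  obtain z1 where z1: "M$2$2 = a + r*z1" using r3 by (metis add_diff_cancel_left' dvdE diff_add_cancel add.commute)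
  have key: "inS r n (M'$i$j - a * (if i = j then 1 else 0))" for i j
  proof (rule inS_cong)
    have "[(Q**M**P)$i$j - a * (Q**P)$i$j = M'$i$j - a * (mat 1 :: int^2^2)$i$j] (mod n)"
      using qp c unfolding mat_cong_def by (intro cong_diff cong_mult) auto
    then show "[M'$i$j - a * (if i = j then 1 else 0) = (Q**M**P)$i$j - a * (Q**P)$i$j] (mod n)"
      by (simp add: mat1_entry cong_sym)
    have "(Q**M**P)$i$j - a * (Q**P)$i$j
        = r * (Q$i$1*z2*P$2$j + Q$i$2*z3*P$1$j + Q$i$2*z1*P$2$j)"
      unfolding mm_entry z2 z3 z1 a_def[symmetric] by (simp add: algebra_simps)
    then show "r dvd (Q**M**P)$i$j - a * (Q**P)$i$j" by simp
  qed
  have k12: "inS r n (M'$1$2)" using key[of 1 2] by simp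
  have k21: "inS r n (M'$2$1)" using key[of 2 1] by simp
  have k11: "inS r n (M'$1$1 - a)" using key[of 1 1] by simp
  have k22: "inS r n (M'$2$2 - a)" using key[of 2 2] by simp
  have k3: "inS r n (M'$2$2 - M'$1$1)" using inS_diff[OF k22 k11] by simp
  have "inS r n (mgcd M')" unfolding mgcd_def[of M'] by (intro inS_gcd k12 k21 k3)
  then show ?thesis unfolding r_def .
qed

theorem proposition40:
  fixes M M' :: "int^2^2" and n :: int
  assumes "n \<ge> 2" and "conj_mod n M M'"
  shows "[det M = det M'] (mod n) \<and> [trace M = trace M'] (mod n)
         \<and> ideal_mod n (mgcd M) = ideal_mod n (mgcd M')"
proof -
  obtain P Q :: "int^2^2" where pq: "mat_cong n (P ** Q) (mat 1)" and qp: "mat_cong n (Q ** P) (mat 1)"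
    and c: "mat_cong n (Q ** M ** P) M'" using assms(2) unfolding conj_mod_def by blast
  have c': "mat_cong n (P ** M' ** Q) M"
  proof -
    have "mat_cong n (P ** M' ** Q) (P ** (Q ** M ** P) ** Q)"
      by (intro mat_cong_mult mat_cong_refl mat_cong_sym[OF c])
    also have "P ** (Q ** M ** P) ** Q = (P ** Q) ** M ** (P ** Q)"
      by (simp add: matrix_mul_assoc)
    finally have "mat_cong n (P ** M' ** Q) ((P ** Q) ** M ** (P ** Q))" .
    moreover have "mat_cong n ((P ** Q) ** M ** (P ** Q)) (mat 1 ** M ** mat 1)"
      by (intro mat_cong_mult mat_cong_refl pq)
    ultimately show ?thesis using mat_cong_trans by fastforce
  qed
  have d1: "[det (Q ** M ** P) = det M'] (mod n)" using mat_cong_det[OF c] .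
  have d2: "[det (Q ** P) = 1] (mod n)" using mat_cong_det[OF qp] by simp
  have "det (Q ** M ** P) = det M * det (Q ** P)" by (simp add: det_mul)
  moreover have "[det M * det (Q ** P) = det M * 1] (mod n)" using d2 by (intro cong_mult) auto
  ultimately have D: "[det M = det M'] (mod n)" using d1
    by (metis cong_sym cong_trans mult_1_right)
  have t1: "[trace (Q ** M ** P) = trace M'] (mod n)" using mat_cong_trace[OF c] .
  have teq: "trace (Q ** M ** P) = trace (M ** (P ** Q))"
    unfolding trace_def sum_2 mm_entry by (simp add: algebra_simps)
  have "mat_cong n (M ** (P ** Q)) (M ** mat 1)" by (intro mat_cong_mult mat_cong_refl pq)
  then have "[trace (M ** (P ** Q)) = trace M] (mod n)" using mat_cong_trace by fastforce
  then have T: "[trace M = trace M'] (mod n)" using t1 teq by (metis cong_sym cong_trans)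
  have "inS (mgcd M) n (mgcd M')" using one_dir[OF qp c] .
  moreover have "inS (mgcd M') n (mgcd M)" using one_dir[OF pq c'] .
  ultimately have "ideal_mod n (mgcd M) = ideal_mod n (mgcd M')"
    using ideal_sub by blast
  with D T show ?thesis by blast
qed

end
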